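(* Let $\alpha\in\mathbb{N}$, $\beta>\frac{3}{2\alpha}$, let $f\in C(\mathbb{R})$ with $f\in L_1(\mathbb{R})$, and let $\xi>0$. Then $$\|M_\xi f-f\|_1\le\left[\frac12+\frac{\Gamma(\frac1\alpha)\Gamma(\beta-\frac1\alpha)}{\Gamma(\frac{1}{2\alpha})\Gamma(\beta-\frac{1}{2\alpha})}+\frac{\Gamma(\frac{3}{2\alpha})\Gamma(\beta-\frac{3}{2\alpha})}{2\Gamma(\frac{1}{2\alpha})\Gamma(\beta-\frac{1}{2\alpha})}\right]\omega_2(f,\xi)_1.$$ Hence $M_\xi\to I$ (the unit operator) in the $L_1$ norm as $\xi\to0$.
   Context: For $\alpha\in\mathbb{N}$, $\beta>\frac{1}{2\alpha}$, $\xi>0$, let $W=\frac{\Gamma(\beta)\alpha\xi^{2\alpha\beta-1}}{\Gamma(\frac{1}{2\alpha})\Gamma(\beta-\frac{1}{2\alpha})}$ and define $M_\xi(f;x)=W\int_{-\infty}^{\infty}f(x+y)\frac{1}{(y^{2\alpha}+\xi^{2\alpha})^{\beta}}dy$, $x\in\mathbb{R}$. For $g\in L_1(\mathbb{R})$, $\Delta_t^2g(x)=g(x+2t)-2g(x+t)+g(x)$ and $\omega_2(g,h)_1=\sup_{|t|\le h}\|\Delta_t^2g(x)\|_{1,x}$, $h>0$. *)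

theory Defs
  imports "HOL-Analysis.Analysis"
begin

definition W_const :: "nat \<Rightarrow> real \<Rightarrow> real \<Rightarrow> real" where
  "W_const \<alpha> \<beta> \<xi> =
     Gamma \<beta> * real \<alpha> * \<xi> powr (2 * real \<alpha> * \<beta> - 1)
     / (Gamma (1 / (2 * real \<alpha>)) * Gamma (\<beta> - 1 / (2 * real \<alpha>)))"

definition M_op :: "nat \<Rightarrow> real \<Rightarrow> real \<Rightarrow> (real \<Rightarrow> real) \<Rightarrow> real \<Rightarrow> real" where
  "M_op \<alpha> \<beta> \<xi> f x =
     W_const \<alpha> \<beta> \<xi> * (LINT y|lborel. f (x + y) / (y ^ (2 * \<alpha>) + \<xi> ^ (2 * \<alpha>)) powr \<beta>)"

text \<open>L1 norm (as an extended nonnegative real, so it is honest also for non-integrable g).\<close>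
definition L1norm :: "(real \<Rightarrow> real) \<Rightarrow> ennreal" where
  "L1norm g = (\<integral>\<^sup>+ x. ennreal \<bar>g x\<bar> \<partial>lborel)"

definition delta2 :: "real \<Rightarrow> (real \<Rightarrow> real) \<Rightarrow> real \<Rightarrow> real" where
  "delta2 t g x = g (x + 2 * t) - 2 * g (x + t) + g x"

definition omega2 :: "(real \<Rightarrow> real) \<Rightarrow> real \<Rightarrow> ennreal" where
  "omega2 g h = (SUP t\<in>{t. \<bar>t\<bar> \<le> h}. L1norm (delta2 t g))"

end

theory Submission
  imports Defs
begin

lemma gamma_scaled:
  fixes A s :: real assumes A: "A > 0" and s: "s > 0"
  shows "(\<integral>\<^sup>+t. ennreal (indicator {0..} t * t powr (s - 1) / exp (A * t)) \<partial>lborel)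
         = ennreal (Gamma s / A powr s)"
proof -
  let ?X = "\<integral>\<^sup>+t. ennreal (indicator {0..} t * t powr (s - 1) / exp (A * t)) \<partial>lborel"
  have "ennreal (Gamma s) = (\<integral>\<^sup>+u. ennreal (indicator {0..} u * u powr (s - 1) / exp u) \<partial>lborel)"
    using s by (simp add: Gamma_conv_nn_integral_real)
  also have "\<dots> = ennreal A * (\<integral>\<^sup>+t. ennreal (indicator {0..} (0 + A * t) * (0 + A * t) powr (s - 1) / exp (0 + A * t)) \<partial>lborel)"
    using A by (subst nn_integral_real_affine[where c=A and t=0]) auto
  also have "(\<integral>\<^sup>+t. ennreal (indicator {0..} (0 + A * t) * (0 + A * t) powr (s - 1) / exp (0 + A * t)) \<partial>lborel)
       = (\<integral>\<^sup>+t. ennreal (A powr (s - 1)) * ennreal (indicator {0..} t * t powr (s - 1) / exp (A * t)) \<partial>lborel)"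
    using A by (intro nn_integral_cong) 
      (auto simp: indicator_def ennreal_mult'[symmetric] powr_mult zero_le_mult_iff)
  also have "\<dots> = ennreal (A powr (s - 1)) * ?X"
    by (subst nn_integral_cmult) auto
  finally have eq: "ennreal (Gamma s) = ennreal (A powr s) * ?X"
    using A by (simp add: ennreal_mult'[symmetric] mult.assoc[symmetric] powr_diff)
  have "?X = ennreal (1 / A powr s) * (ennreal (A powr s) * ?X)"
    using A by (simp add: mult.assoc[symmetric] ennreal_mult'[symmetric])
  also have "\<dots> = ennreal (Gamma s / A powr s)"
    using A s by (simp add: eq[symmetric] ennreal_mult'[symmetric] Gamma_real_pos less_imp_le)
  finally show ?thesis .
qed

lemma exp_sum_split: "exp ((v + c) * t) = exp (t * v) * exp (c * (t::real))"
  by (simp add: ring_distribs exp_add mult.commute)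

lemma arith1: "t > 0 \<Longrightarrow> Gb > 0 \<Longrightarrow> t powr (b - 1) / exp (c * t) / Gb * (Ga / t powr a)
   = Ga / Gb * (t powr (b - a - 1) / exp (c * (t::real)))"
  by (simp add: powr_diff powr_add field_simps)

lemma beta_type:
  fixes a b c :: real assumes a: "a > 0" and ab: "a < b" and c: "c > 0"
  shows "(\<integral>\<^sup>+v. ennreal (indicator {0..} v * v powr (a - 1) * (v + c) powr (- b)) \<partial>lborel)
         = ennreal (Gamma a * Gamma (b - a) * c powr (a - b) / Gamma b)"
proof -
  have b: "b > 0" using a ab by linarith
  have Gb: "Gamma b > 0" using b by (simp add: Gamma_real_pos)
  define F where "F v t = ennreal (indicator {0..} v * v powr (a - 1) * indicator {0..} t * t powr (b - 1)
        / exp ((v + c) * t) / Gamma b)" for v t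
  have [measurable]: "case_prod F \<in> borel_measurable (lborel \<Otimes>\<^sub>M lborel)"
    unfolding F_def by measurable
  have "(\<integral>\<^sup>+v. ennreal (indicator {0..} v * v powr (a - 1) * (v + c) powr (- b)) \<partial>lborel)
       = (\<integral>\<^sup>+v. \<integral>\<^sup>+t. F v t \<partial>lborel \<partial>lborel)"
  proof (intro nn_integral_cong)
    fix v :: real
    show "ennreal (indicator {0..} v * v powr (a - 1) * (v + c) powr (- b)) = (\<integral>\<^sup>+t. F v t \<partial>lborel)"
    proof (cases "v \<ge> 0")
      case True
      have "(\<integral>\<^sup>+t. F v t \<partial>lborel) = (\<integral>\<^sup>+t. ennreal (v powr (a - 1) / Gamma b) *
           ennreal (indicator {0..} t * t powr (b - 1) / exp ((v + c) * t)) \<partial>lborel)"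
        using True Gb unfolding F_def
        by (intro nn_integral_cong) (auto simp: ennreal_mult'[symmetric] indicator_def)
      also have "\<dots> = ennreal (v powr (a - 1) / Gamma b) * ennreal (Gamma b / (v + c) powr b)"
        using True c b by (subst nn_integral_cmult) (auto simp: gamma_scaled)
      also have "\<dots> = ennreal (indicator {0..} v * v powr (a - 1) * (v + c) powr (- b))"
        using True c Gb by (simp add: ennreal_mult'[symmetric] powr_minus_divide)
      finally show ?thesis ..
    next
      case False
      then show ?thesis unfolding F_def by simp
    qed
  qed
  also have "\<dots> = (\<integral>\<^sup>+t. \<integral>\<^sup>+v. F v t \<partial>lborel \<partial>lborel)"
    by (rule lborel_pair.Fubini'[symmetric]) measurable
  also have "\<dots> = (\<integral>\<^sup>+t. ennreal (Gamma a / Gamma b) * ennreal (indicator {0..} t * t powr (b - a - 1) / exp (c * t)) \<partial>lborel)"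
  proof (intro nn_integral_cong_AE eventually_mono[OF AE_lborel_singleton[of 0]])
    fix t :: real assume "t \<noteq> 0"
    show "(\<integral>\<^sup>+v. F v t \<partial>lborel) = ennreal (Gamma a / Gamma b) * ennreal (indicator {0..} t * t powr (b - a - 1) / exp (c * t))"
    proof (cases "t > 0")
      case True
      have "(\<integral>\<^sup>+v. F v t \<partial>lborel) = (\<integral>\<^sup>+v. ennreal (t powr (b - 1) / exp (c * t) / Gamma b) *
           ennreal (indicator {0..} v * v powr (a - 1) / exp (t * v)) \<partial>lborel)"
        using True Gb unfolding F_def exp_sum_split
        by (intro nn_integral_cong)
          (auto simp: ennreal_mult'[symmetric] indicator_def mult_ac)
      also have "\<dots> = ennreal (t powr (b - 1) / exp (c * t) / Gamma b) * ennreal (Gamma a / t powr a)"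
        using True a by (subst nn_integral_cmult) (auto simp: gamma_scaled)
      also have "\<dots> = ennreal (t powr (b - 1) / exp (c * t) / Gamma b * (Gamma a / t powr a))"
        by (rule ennreal_mult'[symmetric]) (use Gb in simp)
      also have "\<dots> = ennreal (Gamma a / Gamma b * (t powr (b - a - 1) / exp (c * t)))"
        by (simp only: arith1[OF True Gb])
      also have "\<dots> = ennreal (Gamma a / Gamma b) * ennreal (indicator {0..} t * t powr (b - a - 1) / exp (c * t))"
        using True Gb a by (subst ennreal_mult') (auto simp: Gamma_real_pos less_imp_le)
      finally show ?thesis .
    next
      case False
      with \<open>t \<noteq> 0\<close> have "t < 0" by simp
      then show ?thesis unfolding F_def by (simp add: indicator_def)
    qed
  qed
  also have "\<dots> = ennreal (Gamma a / Gamma b) * ennreal (Gamma (b - a) / c powr (b - a))"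
    using c ab by (subst nn_integral_cmult) (auto simp: gamma_scaled)
  also have "\<dots> = ennreal (Gamma a * Gamma (b - a) * c powr (a - b) / Gamma b)"
  proof -
    have "ennreal (Gamma a / Gamma b) * ennreal (Gamma (b - a) / c powr (b - a))
        = ennreal (Gamma a / Gamma b * (Gamma (b - a) / c powr (b - a)))"
      using a Gb by (intro ennreal_mult'[symmetric]) (simp add: Gamma_real_pos less_imp_le)
    also have "Gamma a / Gamma b * (Gamma (b - a) / c powr (b - a)) = Gamma a * Gamma (b - a) * c powr (a - b) / Gamma b"
      using c by (simp add: powr_diff field_simps)
    finally show ?thesis .
  qed
  finally show ?thesis .
qed

lemma SUP_indicator_limit:
  fixes H :: "real \<Rightarrow> real" and h :: "nat \<Rightarrow> real"
  assumes [measurable]: "H \<in> borel_measurable borel"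
    and inc: "incseq h" and lim: "filterlim h at_top sequentially"
  shows "(SUP i. \<integral>\<^sup>+x. ennreal (H x * indicator {0..h i} x) \<partial>lborel)
       = (\<integral>\<^sup>+x. ennreal (H x * indicator {0..} x) \<partial>lborel)"
proof -
  have "(SUP i. \<integral>\<^sup>+x. ennreal (H x * indicator {0..h i} x) \<partial>lborel)
      = (\<integral>\<^sup>+x. (SUP i. ennreal (H x * indicator {0..h i} x)) \<partial>lborel)"
  proof (rule nn_integral_monotone_convergence_SUP[symmetric])
    show "incseq (\<lambda>i x. ennreal (H x * indicator {0..h i} x))"
    proof (intro incseq_SucI le_funI)
      fix i x
      have "h i \<le> h (Suc i)" using inc by (simp add: incseq_SucD)
      then show "ennreal (H x * indicator {0..h i} x) \<le> ennreal (H x * indicator {0..h (Suc i)} x)"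
        by (auto simp: indicator_def)
    qed
  qed measurable
  also have "\<dots> = (\<integral>\<^sup>+x. ennreal (H x * indicator {0..} x) \<partial>lborel)"
  proof (intro nn_integral_cong)
    fix x :: real
    show "(SUP i. ennreal (H x * indicator {0..h i} x)) = ennreal (H x * indicator {0..} x)"
    proof (cases "x \<ge> 0")
      case True
      from lim have "eventually (\<lambda>i. h i \<ge> x) sequentially"
        by (simp add: filterlim_at_top)
      then obtain i0 where i0: "h i0 \<ge> x" by (auto simp: eventually_sequentially)
      show ?thesis
      proof (rule antisym)
        show "(SUP i. ennreal (H x * indicator {0..h i} x)) \<le> ennreal (H x * indicator {0..} x)"
          using True by (intro SUP_least) (auto simp: indicator_def)
        have "ennreal (H x * indicator {0..} x) = ennreal (H x * indicator {0..h i0} x)"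
          using True i0 by (simp add: indicator_def)
        also have "\<dots> \<le> (SUP i. ennreal (H x * indicator {0..h i} x))"
          by (rule SUP_upper) simp
        finally show "ennreal (H x * indicator {0..} x) \<le> (SUP i. ennreal (H x * indicator {0..h i} x))" .
      qed
    next
      case False
      then show ?thesis by (simp add: indicator_def)
    qed
  qed
  finally show ?thesis .
qed

lemma subst_pow:
  fixes G :: "real \<Rightarrow> real" and n :: nat
  assumes n: "n \<ge> 1" and [measurable]: "G \<in> borel_measurable borel"
  shows "(\<integral>\<^sup>+y. ennreal (G (y ^ n) * (real n * y ^ (n - 1)) * indicator {0..} y) \<partial>lborel)
       = (\<integral>\<^sup>+v. ennreal (G v * indicator {0..} v) \<partial>lborel)"
proof -
  have eq: "(\<integral>\<^sup>+x. ennreal (G x * indicator {0..(real m) ^ n} x) \<partial>lborel)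
      = (\<integral>\<^sup>+x. ennreal (G (x ^ n) * (real n * x ^ (n - 1)) * indicator {0..real m} x) \<partial>lborel)" for m :: nat
  proof -
    have "(\<integral>\<^sup>+x. ennreal (G x * indicator {(\<lambda>y. y ^ n) 0..(\<lambda>y. y ^ n) (real m)} x) \<partial>lborel)
      = (\<integral>\<^sup>+x. ennreal (G ((\<lambda>y. y ^ n) x) * (\<lambda>y. real n * y ^ (n - 1)) x * indicator {0..real m} x) \<partial>lborel)"
    proof (rule nn_integral_substitution)
      show "set_borel_measurable borel {0 ^ n..real m ^ n} G"
        unfolding set_borel_measurable_def by measurable
      show "((\<lambda>y. y ^ n) has_real_derivative real n * x ^ (n - 1)) (at x)" for x
        by (rule derivative_eq_intros refl | simp)+
      show "continuous_on {0..real m} (\<lambda>y. real n * y ^ (n - 1))"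
        by (intro continuous_intros)
    qed auto
    then show ?thesis using n by (simp add: power_0_left)
  qed
  have inc1: "incseq (\<lambda>m::nat. (real m) ^ n)"
    by (intro incseq_SucI power_mono) auto
  have lim1: "filterlim (\<lambda>m::nat. (real m) ^ n) at_top sequentially"
  proof -
    have "filterlim (\<lambda>m::nat. real m) at_top sequentially" by (rule filterlim_real_sequentially)
    moreover have "\<And>m::nat. real m \<le> (real m) ^ n"
    proof -
      fix m :: nat
      show "real m \<le> (real m) ^ n"
      proof (cases m)
        case 0 then show ?thesis using n by simp
      next
        case (Suc k)
        then have "1 \<le> real m" by simp
        then show ?thesis using n by (metis power_increasing power_one_right)
      qed
    qed
    ultimately show ?thesis
      using filterlim_at_top_mono[of "\<lambda>m::nat. real m" sequentially "\<lambda>m::nat. (real m) ^ n"] by simp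
  qed
  have inc2: "incseq (\<lambda>m::nat. real m)" by (simp add: incseq_def)
  have "(\<integral>\<^sup>+v. ennreal (G v * indicator {0..} v) \<partial>lborel)
      = (SUP m. \<integral>\<^sup>+x. ennreal (G x * indicator {0..(real m) ^ n} x) \<partial>lborel)"
    by (rule SUP_indicator_limit[symmetric]) (use inc1 lim1 in auto)
  also have "\<dots> = (SUP m. \<integral>\<^sup>+x. ennreal (G (x ^ n) * (real n * x ^ (n - 1)) * indicator {0..real m} x) \<partial>lborel)"
    by (simp add: eq)
  also have "\<dots> = (\<integral>\<^sup>+y. ennreal (G (y ^ n) * (real n * y ^ (n - 1)) * indicator {0..} y) \<partial>lborel)"
    by (rule SUP_indicator_limit) (use inc2 filterlim_real_sequentially in auto)
  finally show ?thesis ..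
qed

lemma half_moment:
  fixes n k :: nat and b c :: real
  assumes n: "n \<ge> 1" and c: "c > 0" and ab: "real (k + 1) / real n < b"
  shows "(\<integral>\<^sup>+y. ennreal (indicator {0..} y * y ^ k * (y ^ n + c) powr (- b)) \<partial>lborel)
       = ennreal (Gamma (real (k + 1) / real n) * Gamma (b - real (k + 1) / real n)
            * c powr (real (k + 1) / real n - b) / Gamma b / real n)"
proof -
  define a where "a = real (k + 1) / real n"
  have a: "a > 0" using n by (simp add: a_def)
  have ab': "a < b" using ab by (simp add: a_def)
  define G where "G v = v powr (a - 1) * (v + c) powr (- b) / real n" for v
  have [measurable]: "G \<in> borel_measurable borel" unfolding G_def by measurable
  have "(\<integral>\<^sup>+y. ennreal (indicator {0..} y * y ^ k * (y ^ n + c) powr (- b)) \<partial>lborel)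
      = (\<integral>\<^sup>+y. ennreal (G (y ^ n) * (real n * y ^ (n - 1)) * indicator {0..} y) \<partial>lborel)"
  proof (intro nn_integral_cong_AE eventually_mono[OF AE_lborel_singleton[of 0]])
    fix y :: real assume y0: "y \<noteq> 0"
    show "ennreal (indicator {0..} y * y ^ k * (y ^ n + c) powr (- b))
        = ennreal (G (y ^ n) * (real n * y ^ (n - 1)) * indicator {0..} y)"
    proof (cases "y > 0")
      case True
      have "(y ^ n) powr (a - 1) * y ^ (n - 1) = y ^ k"
      proof -
        have "(y ^ n) powr (a - 1) = y powr (real n * (a - 1))"
          using True by (simp add: powr_realpow[symmetric] powr_powr)
        also have "real n * (a - 1) = real k + 1 - real n" using n by (simp add: a_def field_simps)
        finally have 1: "(y ^ n) powr (a - 1) = y powr (real k + 1 - real n)" .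
        have 2: "y ^ (n - 1) = y powr (real n - 1)"
          using True n by (simp add: powr_realpow[symmetric] of_nat_diff)
        have "(y ^ n) powr (a - 1) * y ^ (n - 1) = y powr (real k + 1 - real n + (real n - 1))"
          unfolding 1 2 by (rule powr_add[symmetric])
        also have "\<dots> = y ^ k" using True by (simp add: powr_realpow)
        finally show ?thesis .
      qed
      then show ?thesis using True n unfolding G_def
        by (simp add: field_simps)
    next
      case False
      then show ?thesis using y0 by (simp add: indicator_def)
    qed
  qed
  also have "\<dots> = (\<integral>\<^sup>+v. ennreal (G v * indicator {0..} v) \<partial>lborel)"
    by (rule subst_pow) (use n in auto)
  also have "\<dots> = (\<integral>\<^sup>+v. ennreal (1 / real n) * ennreal (indicator {0..} v * v powr (a - 1) * (v + c) powr (- b)) \<partial>lborel)"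
    unfolding G_def by (intro nn_integral_cong) (auto simp: ennreal_mult'[symmetric] indicator_def)
  also have "\<dots> = ennreal (1 / real n) * ennreal (Gamma a * Gamma (b - a) * c powr (a - b) / Gamma b)"
    by (subst nn_integral_cmult) (auto simp: beta_type[OF a ab' c])
  also have "\<dots> = ennreal (Gamma a * Gamma (b - a) * c powr (a - b) / Gamma b / real n)"
    by (subst ennreal_mult'[symmetric]) (auto simp: field_simps)
  finally show ?thesis unfolding a_def .
qed

lemma reflect_abs:
  fixes H :: "real \<Rightarrow> real"
  assumes [measurable]: "H \<in> borel_measurable borel"
  shows "(\<integral>\<^sup>+y. ennreal (H \<bar>y\<bar>) \<partial>lborel) = 2 * (\<integral>\<^sup>+y. ennreal (indicator {0..} y * H y) \<partial>lborel)"
proof -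
  have "(\<integral>\<^sup>+y. ennreal (H \<bar>y\<bar>) \<partial>lborel)
      = (\<integral>\<^sup>+y. ennreal (indicator {0..} y * H y) + ennreal (indicator {..<0} y * H \<bar>y\<bar>) \<partial>lborel)"
    by (intro nn_integral_cong) (auto simp: indicator_def)
  also have "\<dots> = (\<integral>\<^sup>+y. ennreal (indicator {0..} y * H y) \<partial>lborel) + (\<integral>\<^sup>+y. ennreal (indicator {..<0} y * H \<bar>y\<bar>) \<partial>lborel)"
    by (rule nn_integral_add) auto
  also have "(\<integral>\<^sup>+y. ennreal (indicator {..<0} y * H \<bar>y\<bar>) \<partial>lborel)
       = ennreal \<bar>-1::real\<bar> * (\<integral>\<^sup>+y. ennreal (indicator {..<0} (0 + -1 * y) * H \<bar>0 + -1 * y\<bar>) \<partial>lborel)"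
    by (rule nn_integral_real_affine) auto
  also have "\<dots> = (\<integral>\<^sup>+y. ennreal (indicator {0..} y * H y) \<partial>lborel)"
    by (simp, intro nn_integral_cong_AE eventually_mono[OF AE_lborel_singleton[of 0]])
      (auto simp: indicator_def)
  finally show ?thesis by (simp add: mult_2 )
qed

lemma full_moment:
  fixes \<alpha> k :: nat and b c :: real
  assumes n: "\<alpha> \<ge> 1" and c: "c > 0" and ab: "real (k + 1) / real (2 * \<alpha>) < b"
  shows "(\<integral>\<^sup>+y. ennreal (\<bar>y\<bar> ^ k * (y ^ (2 * \<alpha>) + c) powr (- b)) \<partial>lborel)
       = ennreal (2 * (Gamma (real (k + 1) / real (2 * \<alpha>)) * Gamma (b - real (k + 1) / real (2 * \<alpha>))
            * c powr (real (k + 1) / real (2 * \<alpha>) - b) / Gamma b / real (2 * \<alpha>)))"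
proof -
  have "(\<integral>\<^sup>+y. ennreal (\<bar>y\<bar> ^ k * (y ^ (2 * \<alpha>) + c) powr (- b)) \<partial>lborel)
     = (\<integral>\<^sup>+y. ennreal ((\<lambda>u. u ^ k * (u ^ (2 * \<alpha>) + c) powr (- b)) \<bar>y\<bar>) \<partial>lborel)"
    by (simp add: power_even_abs)
  also have "\<dots> = 2 * (\<integral>\<^sup>+y. ennreal (indicator {0..} y * y ^ k * (y ^ (2 * \<alpha>) + c) powr (- b)) \<partial>lborel)"
    by (subst reflect_abs) (auto simp: mult.assoc)
  also have "\<dots> = 2 * ennreal (Gamma (real (k + 1) / real (2 * \<alpha>)) * Gamma (b - real (k + 1) / real (2 * \<alpha>))
            * c powr (real (k + 1) / real (2 * \<alpha>) - b) / Gamma b / real (2 * \<alpha>))"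
    using n by (subst half_moment[OF _ c ab]) auto
  also have "\<dots> = ennreal (2 * (Gamma (real (k + 1) / real (2 * \<alpha>)) * Gamma (b - real (k + 1) / real (2 * \<alpha>))
            * c powr (real (k + 1) / real (2 * \<alpha>) - b) / Gamma b / real (2 * \<alpha>)))"
    by (subst ennreal_mult') simp_all
  finally show ?thesis .
qed

lemma D_tele:
  fixes g :: "real \<Rightarrow> real"
  shows "g (x + real m * t) - g x = (\<Sum>i<m. g (x + real i * t + t) - g (x + real i * t))"
  by (induction m) (auto simp: algebra_simps)

lemma delta2_mult:
  fixes g :: "real \<Rightarrow> real"
  shows "delta2 (real m * t) g x = (\<Sum>i<m. \<Sum>j<m. delta2 t g (x + real (i + j) * t))"
proof -
  define e where "e y = g (y + real m * t) - g y" for y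
  have e: "e y = (\<Sum>j<m. g (y + real j * t + t) - g (y + real j * t))" for y
    unfolding e_def by (rule D_tele)
  have "delta2 (real m * t) g x = e (x + real m * t) - e x"
    unfolding e_def delta2_def by (simp add: algebra_simps)
  also have "\<dots> = (\<Sum>i<m. e (x + real i * t + t) - e (x + real i * t))"
    by (rule D_tele)
  also have "\<dots> = (\<Sum>i<m. \<Sum>j<m. delta2 t g (x + real (i + j) * t))"
    unfolding e sum_subtractf[symmetric]
    by (intro sum.cong refl) (simp add: delta2_def algebra_simps)
  finally show ?thesis .
qed

lemma cont_meas: "continuous_on UNIV (g :: real \<Rightarrow> real) \<Longrightarrow> g \<in> borel_measurable borel"
  by (rule borel_measurable_continuous_onI)

lemma L1norm_shift:
  fixes d :: "real \<Rightarrow> real" assumes [measurable]: "d \<in> borel_measurable borel"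
  shows "(\<integral>\<^sup>+x. ennreal \<bar>d (x + s)\<bar> \<partial>lborel) = L1norm d"
proof -
  have "L1norm d = ennreal \<bar>1::real\<bar> * (\<integral>\<^sup>+x. ennreal \<bar>d (s + 1 * x)\<bar> \<partial>lborel)"
    unfolding L1norm_def by (rule nn_integral_real_affine) auto
  then show ?thesis by (simp add: add.commute)
qed

lemma delta2_meas[measurable]:
  assumes [measurable]: "g \<in> borel_measurable borel"
  shows "delta2 t g \<in> borel_measurable borel"
  unfolding delta2_def by measurable

lemma L1norm_delta2_mult:
  fixes g :: "real \<Rightarrow> real" assumes [measurable]: "g \<in> borel_measurable borel"
  shows "L1norm (delta2 (real m * t) g) \<le> ennreal (real (m * m)) * L1norm (delta2 t g)"
proof -
  have "L1norm (delta2 (real m * t) g)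
      = (\<integral>\<^sup>+x. ennreal \<bar>\<Sum>i<m. \<Sum>j<m. delta2 t g (x + real (i + j) * t)\<bar> \<partial>lborel)"
    unfolding L1norm_def delta2_mult ..
  also have "\<dots> \<le> (\<integral>\<^sup>+x. (\<Sum>i<m. \<Sum>j<m. ennreal \<bar>delta2 t g (x + real (i + j) * t)\<bar>) \<partial>lborel)"
  proof (intro nn_integral_mono)
    fix x
    have "\<bar>\<Sum>i<m. \<Sum>j<m. delta2 t g (x + real (i + j) * t)\<bar> \<le> (\<Sum>i<m. \<Sum>j<m. \<bar>delta2 t g (x + real (i + j) * t)\<bar>)"
      by (rule order_trans[OF sum_abs]) (intro sum_mono sum_abs)
    then show "ennreal \<bar>\<Sum>i<m. \<Sum>j<m. delta2 t g (x + real (i + j) * t)\<bar> \<le> (\<Sum>i<m. \<Sum>j<m. ennreal \<bar>delta2 t g (x + real (i + j) * t)\<bar>)"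
      by (simp add: sum_nonneg)
  qed
  also have "\<dots> = (\<Sum>i<m. \<Sum>j<m. \<integral>\<^sup>+x. ennreal \<bar>delta2 t g (x + real (i + j) * t)\<bar> \<partial>lborel)"
    apply (subst nn_integral_sum, measurable)
    apply (intro sum.cong refl)
    apply (subst nn_integral_sum, measurable)
    done
  also have "\<dots> = (\<Sum>i<m. \<Sum>j<m. L1norm (delta2 t g))"
    by (simp add: L1norm_shift)
  also have "\<dots> = ennreal (real (m * m)) * L1norm (delta2 t g)"
    by (simp add: ennreal_of_nat_eq_real_of_nat mult.assoc[symmetric] ennreal_mult)
  finally show ?thesis .
qed

lemma delta2_bound:
  fixes g :: "real \<Rightarrow> real" and \<xi> y :: real
  assumes [measurable]: "g \<in> borel_measurable borel" and xi: "\<xi> > 0"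
  shows "L1norm (delta2 y g) \<le> ennreal ((1 + \<bar>y\<bar> / \<xi>) ^ 2) * omega2 g \<xi>"
proof -
  define m where "m = nat \<lfloor>\<bar>y\<bar> / \<xi>\<rfloor> + 1"
  have m1: "real m > \<bar>y\<bar> / \<xi>" unfolding m_def
    using xi by (simp add: of_nat_nat) linarith
  have m2: "real m \<le> 1 + \<bar>y\<bar> / \<xi>" unfolding m_def
    using xi by (simp add: of_nat_nat)
  have mpos: "real m > 0" unfolding m_def by simp
  define t where "t = y / real m"
  have yt: "y = real m * t" unfolding t_def using mpos by simp
  have tle: "\<bar>t\<bar> \<le> \<xi>"
    unfolding t_def using m1 mpos xi by (simp add: abs_div field_simps)
  have "L1norm (delta2 y g) \<le> ennreal (real (m * m)) * L1norm (delta2 t g)"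
    unfolding yt by (rule L1norm_delta2_mult) measurable
  also have "\<dots> \<le> ennreal (real (m * m)) * omega2 g \<xi>"
    unfolding omega2_def using tle by (intro mult_left_mono SUP_upper) auto
  also have "\<dots> \<le> ennreal ((1 + \<bar>y\<bar> / \<xi>) ^ 2) * omega2 g \<xi>"
  proof (intro mult_right_mono ennreal_leI)
    show "real (m * m) \<le> (1 + \<bar>y\<bar> / \<xi>) ^ 2"
      using m2 mpos by (simp add: power2_eq_square mult_mono)
  qed simp
  finally show ?thesis .
qed

lemma Wmom:
  fixes \<alpha> k :: nat and \<beta> \<xi> :: real
  assumes al: "\<alpha> \<ge> 1" and xi: "\<xi> > 0" and ab: "real (k + 1) / real (2 * \<alpha>) < \<beta>"
  shows "W_const \<alpha> \<beta> \<xi> * (2 * (Gamma (real (k + 1) / real (2 * \<alpha>)) * Gamma (\<beta> - real (k + 1) / real (2 * \<alpha>))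
            * (\<xi> ^ (2 * \<alpha>)) powr (real (k + 1) / real (2 * \<alpha>) - \<beta>) / Gamma \<beta> / real (2 * \<alpha>)))
       = \<xi> ^ k * (Gamma (real (k + 1) / real (2 * \<alpha>)) * Gamma (\<beta> - real (k + 1) / real (2 * \<alpha>))
           / (Gamma (1 / (2 * real \<alpha>)) * Gamma (\<beta> - 1 / (2 * real \<alpha>))))"
proof -
  define a where "a = real (k + 1) / real (2 * \<alpha>)"
  have apos: "a > 0" using al by (simp add: a_def)
  have bpos: "\<beta> > 0" using apos ab a_def by linarith
  have Gb: "Gamma \<beta> > 0" using bpos by (simp add: Gamma_real_pos)
  have e1: "(\<xi> ^ (2 * \<alpha>)) powr (a - \<beta>) = \<xi> powr (real k + 1 - 2 * real \<alpha> * \<beta>)"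
  proof -
    have "(\<xi> ^ (2 * \<alpha>)) powr (a - \<beta>) = \<xi> powr (real (2 * \<alpha>) * (a - \<beta>))"
      using xi by (simp add: powr_realpow[symmetric] powr_powr del: of_nat_mult)
    also have "real (2 * \<alpha>) * (a - \<beta>) = real k + 1 - 2 * real \<alpha> * \<beta>"
      using al by (simp add: a_def field_simps)
    finally show ?thesis .
  qed
  have e2: "\<xi> powr (2 * real \<alpha> * \<beta> - 1) * \<xi> powr (real k + 1 - 2 * real \<alpha> * \<beta>) = \<xi> ^ k"
  proof -
    have "\<xi> powr (2 * real \<alpha> * \<beta> - 1) * \<xi> powr (real k + 1 - 2 * real \<alpha> * \<beta>)
        = \<xi> powr (2 * real \<alpha> * \<beta> - 1 + (real k + 1 - 2 * real \<alpha> * \<beta>))"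
      by (rule powr_add[symmetric])
    also have "2 * real \<alpha> * \<beta> - 1 + (real k + 1 - 2 * real \<alpha> * \<beta>) = real k" by simp
    finally show ?thesis using xi by (simp add: powr_realpow)
  qed
  have "W_const \<alpha> \<beta> \<xi> * (2 * (Gamma a * Gamma (\<beta> - a) * (\<xi> ^ (2 * \<alpha>)) powr (a - \<beta>) / Gamma \<beta> / real (2 * \<alpha>)))
      = (\<xi> powr (2 * real \<alpha> * \<beta> - 1) * \<xi> powr (real k + 1 - 2 * real \<alpha> * \<beta>)) *
        (Gamma a * Gamma (\<beta> - a) / (Gamma (1 / (2 * real \<alpha>)) * Gamma (\<beta> - 1 / (2 * real \<alpha>))))"
    unfolding W_const_def e1 using Gb al by (simp add: field_simps)
  then show ?thesis unfolding e2 a_def .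
qed

lemma arith3: "(ID::real) = 2 * I1 - 2 * fx * IK \<Longrightarrow> W * IK = 1 \<Longrightarrow> W * I1 - fx = W / 2 * ID"
proof -
  assume h1: "ID = 2 * I1 - 2 * fx * IK" and h2: "W * IK = 1"
  have "W / 2 * ID = W * I1 - fx * (W * IK)" unfolding h1 by (simp add: algebra_simps)
  then show ?thesis using h2 by simp
qed

lemma main_bound:
  fixes \<alpha> :: nat and \<beta> \<xi> :: real and f :: "real \<Rightarrow> real"
  assumes al: "\<alpha> \<ge> 1"
    and be: "\<beta> > 3 / (2 * real \<alpha>)"
    and cf: "continuous_on UNIV f"
    and fi: "integrable lborel f"
    and xi: "\<xi> > 0"
  shows "L1norm (\<lambda>x. M_op \<alpha> \<beta> \<xi> f x - f x)
           \<le> ennreal (1/2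
               + Gamma (1 / real \<alpha>) * Gamma (\<beta> - 1 / real \<alpha>)
                 / (Gamma (1 / (2 * real \<alpha>)) * Gamma (\<beta> - 1 / (2 * real \<alpha>)))
               + Gamma (3 / (2 * real \<alpha>)) * Gamma (\<beta> - 3 / (2 * real \<alpha>))
                 / (2 * Gamma (1 / (2 * real \<alpha>)) * Gamma (\<beta> - 1 / (2 * real \<alpha>))))
             * omega2 f \<xi>"
proof -
  have fm[measurable]: "f \<in> borel_measurable borel" using cf by (rule cont_meas)
  define n where "n = 2 * \<alpha>"
  define c where "c = \<xi> ^ n"
  have cpos: "c > 0" using xi by (simp add: c_def)
  have ne: "even n" by (simp add: n_def)
  have apos: "real \<alpha> > 0" using al by simp
  have bpos: "\<beta> > 0"
  proof -
    have "3 / (2 * real \<alpha>) > 0" using apos by simp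
    then show ?thesis using be by linarith
  qed
  define K where "K y = (y ^ n + c) powr (- \<beta>)" for y
  have Km[measurable]: "K \<in> borel_measurable borel" unfolding K_def by measurable
  have ynn: "y ^ n \<ge> 0" for y :: real using ne by (simp add: zero_le_even_power)
  have Kpos: "K y > 0" for y unfolding K_def using cpos ynn[of y] by simp
  have Kabs: "\<bar>K y\<bar> = K y" for y using Kpos[of y] by simp
  have Kle: "K y \<le> c powr (- \<beta>)" for y
  proof -
    have "c powr \<beta> \<le> (y ^ n + c) powr \<beta>"
      using cpos ynn[of y] bpos by (intro powr_mono2) auto
    then show ?thesis unfolding K_def using cpos ynn[of y] by (simp add: powr_minus_divide divide_simps)
  qed
  have Keven: "K (- y) = K y" for y unfolding K_def using ne by simp
  have bk: "real (k + 1) / real (2 * \<alpha>) < \<beta>" if "k \<le> 2" for k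
  proof -
    have "real (k + 1) / real (2 * \<alpha>) \<le> 3 / (2 * real \<alpha>)"
    proof -
      have "real (k + 1) \<le> 3" using that by simp
      then show ?thesis using apos by (simp add: divide_right_mono)
    qed
    then show ?thesis using be by linarith
  qed
  define mom where "mom k = 2 * (Gamma (real (k + 1) / real (2 * \<alpha>)) * Gamma (\<beta> - real (k + 1) / real (2 * \<alpha>))
            * c powr (real (k + 1) / real (2 * \<alpha>) - \<beta>) / Gamma \<beta> / real (2 * \<alpha>))" for k :: nat
  have momI: "(\<integral>\<^sup>+y. ennreal (\<bar>y\<bar> ^ k * K y) \<partial>lborel) = ennreal (mom k)" if "k \<le> 2" for k
    unfolding K_def mom_def n_def by (rule full_moment[OF al _ bk[OF that]]) (use cpos n_def in simp)
  define W where "W = W_const \<alpha> \<beta> \<xi>"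
  define R where "R k = Gamma (real (k + 1) / real (2 * \<alpha>)) * Gamma (\<beta> - real (k + 1) / real (2 * \<alpha>))
           / (Gamma (1 / (2 * real \<alpha>)) * Gamma (\<beta> - 1 / (2 * real \<alpha>)))" for k :: nat
  have Wmom': "W * mom k = \<xi> ^ k * R k" if "k \<le> 2" for k
    unfolding W_def mom_def R_def c_def n_def by (rule Wmom[OF al xi bk[OF that]])
  have R0: "R 0 = 1"
  proof -
    have "Gamma (1 / (2 * real \<alpha>)) > 0" using apos by (simp add: Gamma_real_pos)
    moreover have "Gamma (\<beta> - 1 / (2 * real \<alpha>)) > 0" using bk[of 0] by (simp add: Gamma_real_pos)
    ultimately show ?thesis unfolding R_def by simp
  qed
  have Wm0: "W * mom 0 = 1" using Wmom'[of 0] R0 by simp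
  have mom_nonneg: "mom k \<ge> 0" if "k \<le> 2" for k
  proof -
    have "Gamma (real (k + 1) / real (2 * \<alpha>)) > 0" using apos by (intro Gamma_real_pos) simp
    moreover have "Gamma (\<beta> - real (k + 1) / real (2 * \<alpha>)) > 0" using bk[OF that] by (intro Gamma_real_pos) simp
    moreover have "Gamma \<beta> > 0" using bpos by (rule Gamma_real_pos)
    ultimately show ?thesis unfolding mom_def
      by (intro mult_nonneg_nonneg divide_nonneg_nonneg) auto
  qed
  have Wpos: "W > 0"
  proof -
    have "Gamma \<beta> > 0" using bpos by (simp add: Gamma_real_pos)
    moreover have "Gamma (1 / (2 * real \<alpha>)) > 0" using apos by (simp add: Gamma_real_pos)
    moreover have "Gamma (\<beta> - 1 / (2 * real \<alpha>)) > 0" using bk[of 0] by (simp add: Gamma_real_pos)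
    ultimately show ?thesis unfolding W_def W_const_def using apos xi by simp
  qed
  have Kint: "integrable lborel K"
    by (rule integrableI_nonneg) (use Kpos momI[of 0] in \<open>auto intro!: less_imp_le\<close>)
  have intK: "(LINT y|lborel. K y) = mom 0"
  proof -
    have "ennreal (LINT y|lborel. K y) = (\<integral>\<^sup>+y. ennreal (K y) \<partial>lborel)"
      by (rule nn_integral_eq_integral[symmetric]) (use Kint Kpos in \<open>auto intro!: less_imp_le\<close>)
    also have "\<dots> = ennreal (mom 0)" using momI[of 0] by simp
    finally have eq: "ennreal (LINT y|lborel. K y) = ennreal (mom 0)" .
    have nn: "(LINT y|lborel. K y) \<ge> 0"
      by (rule integral_nonneg_AE) (use Kpos in \<open>auto intro!: less_imp_le\<close>)
    show ?thesis using ennreal_inj[OF nn mom_nonneg[of 0]] eq by simp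
  qed
  have WK: "W * (LINT y|lborel. K y) = 1" using intK Wm0 by simp
  have fsh: "integrable lborel (\<lambda>y. f (x + y) * K y)" for x
  proof -
    have i1: "integrable lborel (\<lambda>y. \<bar>f (x + 1 * y)\<bar> * c powr (- \<beta>))"
      using lborel_integrable_real_affine[OF fi, of 1 x] by (intro integrable_mult_left integrable_abs) auto
    have ae: "AE y in lborel. norm (f (x + y) * K y) \<le> norm (\<bar>f (x + 1 * y)\<bar> * c powr (- \<beta>))"
    proof (intro AE_I2)
      fix y
      have "\<bar>K y\<bar> \<le> c powr (- \<beta>)" using Kle[of y] Kpos[of y] by simp
      then show "norm (f (x + y) * K y) \<le> norm (\<bar>f (x + 1 * y)\<bar> * c powr (- \<beta>))"
        by (simp add: abs_mult mult_left_mono)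
    qed
    have m: "(\<lambda>y. f (x + y) * K y) \<in> borel_measurable lborel" by measurable
    show ?thesis by (rule Bochner_Integration.integrable_bound[OF i1 m ae])
  qed
  have fshm: "integrable lborel (\<lambda>y. f (x - y) * K y)" for x
  proof -
    have "integrable lborel (\<lambda>y. f (x + (0 + -1 * y)) * K (0 + -1 * y))"
      using lborel_integrable_real_affine[OF fsh[of x], of "-1" 0] by simp
    then show ?thesis using Keven by simp
  qed
  have refl: "(LINT y|lborel. f (x - y) * K y) = (LINT y|lborel. f (x + y) * K y)" for x
  proof -
    have "(LINT y|lborel. f (x + y) * K y) = \<bar>-1::real\<bar> *\<^sub>R (LINT y|lborel. f (x + (0 + -1 * y)) * K (0 + -1 * y))"
      by (rule lborel_integral_real_affine) simp
    then show ?thesis using Keven by simp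
  qed
  have Mop: "M_op \<alpha> \<beta> \<xi> f x = W * (LINT y|lborel. f (x + y) * K y)" for x
    unfolding M_op_def W_def K_def n_def c_def
    using xi by (simp add: powr_minus_divide)
  define \<Delta> where "\<Delta> x y = f (x + y) - 2 * f x + f (x - y)" for x y
  have Mdiff: "M_op \<alpha> \<beta> \<xi> f x - f x = W / 2 * (LINT y|lborel. \<Delta> x y * K y)" for x
  proof -
    have "(LINT y|lborel. \<Delta> x y * K y)
        = (LINT y|lborel. f (x + y) * K y - 2 * f x * K y + f (x - y) * K y)"
      unfolding \<Delta>_def by (simp add: algebra_simps)
    also have "\<dots> = (LINT y|lborel. f (x + y) * K y) - 2 * f x * (LINT y|lborel. K y) + (LINT y|lborel. f (x - y) * K y)"
      using fsh[of x] fshm[of x] Kint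
      by (simp add: integral_add integral_diff integrable_diff)
    also have "\<dots> = 2 * (LINT y|lborel. f (x + y) * K y) - 2 * f x * (LINT y|lborel. K y)"
      by (simp add: refl)
    finally have h: "(LINT y|lborel. \<Delta> x y * K y) = 2 * (LINT y|lborel. f (x + y) * K y) - 2 * f x * (LINT y|lborel. K y)" .
    show ?thesis unfolding Mop by (rule arith3[OF h WK])
  qed
  have Dint: "integrable lborel (\<lambda>y. \<Delta> x y * K y)" for x
  proof -
    have "integrable lborel (\<lambda>y. f (x + y) * K y - 2 * f x * K y + f (x - y) * K y)"
      using fsh[of x] fshm[of x] Kint by auto
    then show ?thesis unfolding \<Delta>_def by (simp add: algebra_simps)
  qed
  define \<Phi> where "\<Phi> x y = ennreal (\<bar>\<Delta> x y\<bar> * K y)" for x y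
  have \<Phi>m[measurable]: "case_prod \<Phi> \<in> borel_measurable (lborel \<Otimes>\<^sub>M lborel)"
    unfolding \<Phi>_def \<Delta>_def by measurable
  have pt: "ennreal \<bar>M_op \<alpha> \<beta> \<xi> f x - f x\<bar> \<le> ennreal (W / 2) * (\<integral>\<^sup>+y. \<Phi> x y \<partial>lborel)" for x
  proof -
    have "ennreal \<bar>M_op \<alpha> \<beta> \<xi> f x - f x\<bar> = ennreal (W / 2) * ennreal (norm (LINT y|lborel. \<Delta> x y * K y))"
    proof -
      have e: "\<bar>M_op \<alpha> \<beta> \<xi> f x - f x\<bar> = W / 2 * norm (LINT y|lborel. \<Delta> x y * K y)"
        using Wpos by (simp add: Mdiff abs_mult)
      show ?thesis unfolding e by (rule ennreal_mult') (use Wpos in simp)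
    qed
    also have "\<dots> \<le> ennreal (W / 2) * (\<integral>\<^sup>+y. ennreal (norm (\<Delta> x y * K y)) \<partial>lborel)"
      by (intro mult_left_mono integral_norm_bound_ennreal Dint) simp
    also have "\<dots> = ennreal (W / 2) * (\<integral>\<^sup>+y. \<Phi> x y \<partial>lborel)"
      unfolding \<Phi>_def by (simp add: abs_mult Kabs)
    finally show ?thesis .
  qed
  have inner: "(\<integral>\<^sup>+x. \<Phi> x y \<partial>lborel) = ennreal (K y) * L1norm (delta2 y f)" for y
  proof -
    have "(\<integral>\<^sup>+x. \<Phi> x y \<partial>lborel) = (\<integral>\<^sup>+x. ennreal (K y) * ennreal \<bar>delta2 y f (x + - y)\<bar> \<partial>lborel)"
    proof (intro nn_integral_cong)
      fix x
      have a1: "x + - y + 2 * y = x + y" "x + - y + y = x" "x + - y = x - y" by simp_all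
      have d: "delta2 y f (x + - y) = \<Delta> x y" unfolding delta2_def \<Delta>_def a1 by (simp add: add.commute)
      show "\<Phi> x y = ennreal (K y) * ennreal \<bar>delta2 y f (x + - y)\<bar>"
        unfolding d \<Phi>_def using Kpos[of y] by (simp add: ennreal_mult'[symmetric] mult.commute)
    qed
    also have "\<dots> = ennreal (K y) * (\<integral>\<^sup>+x. ennreal \<bar>delta2 y f (x + - y)\<bar> \<partial>lborel)"
      by (rule nn_integral_cmult) measurable
    also have "\<dots> = ennreal (K y) * L1norm (delta2 y f)"
      by (subst L1norm_shift) measurable
    finally show ?thesis .
  qed
  define S where "S = mom 0 + 2 / \<xi> * mom 1 + 1 / \<xi>^2 * mom 2"
  have Sint: "(\<integral>\<^sup>+y. ennreal (K y * (1 + \<bar>y\<bar> / \<xi>) ^ 2) \<partial>lborel) = ennreal S"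
  proof -
    have "(\<integral>\<^sup>+y. ennreal (K y * (1 + \<bar>y\<bar> / \<xi>) ^ 2) \<partial>lborel)
        = (\<integral>\<^sup>+y. ennreal (\<bar>y\<bar> ^ 0 * K y) + (ennreal (2 / \<xi>) * ennreal (\<bar>y\<bar> ^ 1 * K y)
              + ennreal (1 / \<xi>^2) * ennreal (\<bar>y\<bar> ^ 2 * K y)) \<partial>lborel)"
    proof (intro nn_integral_cong)
      fix y
      have "K y * (1 + \<bar>y\<bar> / \<xi>) ^ 2 = \<bar>y\<bar> ^ 0 * K y + (2 / \<xi> * (\<bar>y\<bar> ^ 1 * K y) + 1 / \<xi>^2 * (\<bar>y\<bar> ^ 2 * K y))"
        using xi by (simp add: power2_eq_square field_simps)
      then show "ennreal (K y * (1 + \<bar>y\<bar> / \<xi>) ^ 2) = ennreal (\<bar>y\<bar> ^ 0 * K y) + (ennreal (2 / \<xi>) * ennreal (\<bar>y\<bar> ^ 1 * K y)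
              + ennreal (1 / \<xi>^2) * ennreal (\<bar>y\<bar> ^ 2 * K y))"
        using xi Kpos[of y] by (simp add: ennreal_plus[symmetric] ennreal_mult[symmetric] del: ennreal_plus)
    qed
    also have "\<dots> = ennreal (mom 0) + (ennreal (2 / \<xi>) * ennreal (mom 1) + ennreal (1 / \<xi>^2) * ennreal (mom 2))"
    proof -
      have m0: "(\<integral>\<^sup>+y. ennreal (K y) \<partial>lborel) = ennreal (mom 0)" using momI[of 0] by simp
      have m1: "(\<integral>\<^sup>+y. ennreal (\<bar>y\<bar> * K y) \<partial>lborel) = ennreal (mom (Suc 0))" using momI[of 1] by simp
      have m2: "(\<integral>\<^sup>+y. ennreal (y\<^sup>2 * K y) \<partial>lborel) = ennreal (mom 2)" using momI[of 2] by simp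
      show ?thesis by (simp add: nn_integral_add nn_integral_cmult m0 m1 m2)
    qed
    also have "\<dots> = ennreal S"
      unfolding S_def using xi mom_nonneg[of 0] mom_nonneg[of 1] mom_nonneg[of 2]
      by (simp add: ennreal_plus[symmetric] ennreal_mult[symmetric] del: ennreal_plus)
    finally show ?thesis .
  qed
  have WS: "W / 2 * S = 1/2
               + Gamma (1 / real \<alpha>) * Gamma (\<beta> - 1 / real \<alpha>)
                 / (Gamma (1 / (2 * real \<alpha>)) * Gamma (\<beta> - 1 / (2 * real \<alpha>)))
               + Gamma (3 / (2 * real \<alpha>)) * Gamma (\<beta> - 3 / (2 * real \<alpha>))
                 / (2 * Gamma (1 / (2 * real \<alpha>)) * Gamma (\<beta> - 1 / (2 * real \<alpha>)))"
  proof -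
    have "W / 2 * S = (W * mom 0) / 2 + (W * mom 1) / \<xi> + (W * mom 2) / (2 * \<xi>^2)"
      unfolding S_def using xi by (simp add: field_simps)
    also have "\<dots> = 1/2 + R 1 + R 2 / 2"
      using xi by (simp add: Wm0 Wmom' power2_eq_square)
    also have "R 1 = Gamma (1 / real \<alpha>) * Gamma (\<beta> - 1 / real \<alpha>)
                 / (Gamma (1 / (2 * real \<alpha>)) * Gamma (\<beta> - 1 / (2 * real \<alpha>)))"
      unfolding R_def using apos by simp
    also have "R 2 / 2 = Gamma (3 / (2 * real \<alpha>)) * Gamma (\<beta> - 3 / (2 * real \<alpha>))
                 / (2 * Gamma (1 / (2 * real \<alpha>)) * Gamma (\<beta> - 1 / (2 * real \<alpha>)))"
      unfolding R_def by (simp add: field_simps)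
    finally show ?thesis .
  qed
  have "L1norm (\<lambda>x. M_op \<alpha> \<beta> \<xi> f x - f x) \<le> (\<integral>\<^sup>+x. ennreal (W / 2) * (\<integral>\<^sup>+y. \<Phi> x y \<partial>lborel) \<partial>lborel)"
    unfolding L1norm_def by (intro nn_integral_mono pt)
  also have "\<dots> = ennreal (W / 2) * (\<integral>\<^sup>+x. \<integral>\<^sup>+y. \<Phi> x y \<partial>lborel \<partial>lborel)"
    by (rule nn_integral_cmult) measurable
  also have "(\<integral>\<^sup>+x. \<integral>\<^sup>+y. \<Phi> x y \<partial>lborel \<partial>lborel) = (\<integral>\<^sup>+y. \<integral>\<^sup>+x. \<Phi> x y \<partial>lborel \<partial>lborel)"
    by (rule lborel_pair.Fubini'[symmetric]) measurable
  also have "\<dots> = (\<integral>\<^sup>+y. ennreal (K y) * L1norm (delta2 y f) \<partial>lborel)"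
    by (simp add: inner)
  also have "\<dots> \<le> (\<integral>\<^sup>+y. ennreal (K y * (1 + \<bar>y\<bar> / \<xi>) ^ 2) * omega2 f \<xi> \<partial>lborel)"
  proof (intro nn_integral_mono)
    fix y
    have "ennreal (K y) * L1norm (delta2 y f) \<le> ennreal (K y) * (ennreal ((1 + \<bar>y\<bar> / \<xi>) ^ 2) * omega2 f \<xi>)"
      by (intro mult_left_mono delta2_bound xi fm) simp
    then show "ennreal (K y) * L1norm (delta2 y f) \<le> ennreal (K y * (1 + \<bar>y\<bar> / \<xi>) ^ 2) * omega2 f \<xi>"
      using Kpos[of y] by (simp add: ennreal_mult' mult.assoc)
  qed
  also have "\<dots> = ennreal S * omega2 f \<xi>"
    by (subst nn_integral_multc) (simp_all add: Sint)
  finally have "L1norm (\<lambda>x. M_op \<alpha> \<beta> \<xi> f x - f x) \<le> ennreal (W / 2) * (ennreal S * omega2 f \<xi>)"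
    by (simp add: mult_left_mono)
  also have "\<dots> = ennreal (W / 2 * S) * omega2 f \<xi>"
    using Wpos by (simp only: ennreal_mult'[of "W / 2" S] mult.assoc[symmetric])
  finally show ?thesis unfolding WS .
qed

lemma tail_small:
  fixes f :: "real \<Rightarrow> real"
  assumes fi: "integrable lborel f" and e: "e > 0"
  shows "\<exists>N::nat. (\<integral>\<^sup>+x. ennreal (if real N \<le> \<bar>x\<bar> then \<bar>f x\<bar> else 0) \<partial>lborel) \<le> ennreal e"
proof -
  have fm[measurable]: "f \<in> borel_measurable lborel" using fi by (rule borel_measurable_integrable)
  define s where "s i x = (if real i \<le> \<bar>x\<bar> then \<bar>f x\<bar> else 0)" for i :: nat and x
  have sm[measurable]: "s i \<in> borel_measurable lborel" for i unfolding s_def by measurable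
  have lim: "AE x in lborel. (\<lambda>i. s i x) \<longlonglongrightarrow> 0"
  proof (intro AE_I2)
    fix x :: real
    have "eventually (\<lambda>i. s i x = 0) sequentially"
    proof -
      obtain N :: nat where "\<bar>x\<bar> < real N" using reals_Archimedean2 by blast
      then show ?thesis unfolding s_def eventually_sequentially
        by (intro exI[of _ N]) auto
    qed
    then show "(\<lambda>i. s i x) \<longlonglongrightarrow> 0" by (rule tendsto_eventually)
  qed
  have bound: "AE x in lborel. norm (s i x) \<le> \<bar>f x\<bar>" for i
    unfolding s_def by auto
  have absint: "integrable lborel (\<lambda>x. \<bar>f x\<bar>)" using fi by (rule integrable_abs)
  have "(\<lambda>i. LINT x|lborel. s i x) \<longlonglongrightarrow> (LINT x|lborel. (0::real))"
    using integral_dominated_convergence[OF _ sm absint lim bound] by simp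
  then have "(\<lambda>i. LINT x|lborel. s i x) \<longlonglongrightarrow> 0" by simp
  then obtain N where "\<bar>(LINT x|lborel. s N x) - 0\<bar> < e"
    using e by (auto dest!: LIMSEQ_D simp: dist_real_def)
  then have lt: "(LINT x|lborel. s N x) < e" by simp
  have sint: "integrable lborel (s N)"
    using integrable_dominated_convergence2[OF _ sm absint lim bound] by simp
  have "(\<integral>\<^sup>+x. ennreal (s N x) \<partial>lborel) = ennreal (LINT x|lborel. s N x)"
    by (rule nn_integral_eq_integral[OF sint]) (auto simp: s_def)
  also have "\<dots> \<le> ennreal e" using lt by (intro ennreal_leI) simp
  finally show ?thesis unfolding s_def by blast
qed

lemma transl_small:
  fixes f :: "real \<Rightarrow> real"
  assumes cf: "continuous_on UNIV f" and fi: "integrable lborel f" and e: "e > 0"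
  shows "\<exists>d>0. \<forall>t. \<bar>t\<bar> < d \<longrightarrow> (\<integral>\<^sup>+x. ennreal \<bar>f (x + t) - f x\<bar> \<partial>lborel) \<le> ennreal e"
proof -
  have fm[measurable]: "f \<in> borel_measurable borel" using cf by (rule cont_meas)
  obtain N :: nat where N: "(\<integral>\<^sup>+x. ennreal (if real N \<le> \<bar>x\<bar> then \<bar>f x\<bar> else 0) \<partial>lborel) \<le> ennreal (e / 4)"
    using tail_small[OF fi, of "e / 4"] e by auto
  define R where "R = real N"
  have R0: "R \<ge> 0" unfolding R_def by simp
  define g where "g x = (if R \<le> \<bar>x\<bar> then \<bar>f x\<bar> else 0)" for x
  have gm[measurable]: "g \<in> borel_measurable borel" unfolding g_def by measurable
  have gint: "(\<integral>\<^sup>+x. ennreal (g x) \<partial>lborel) \<le> ennreal (e / 4)" using N unfolding g_def R_def .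
  have gint': "(\<integral>\<^sup>+x. ennreal (g (x + t)) \<partial>lborel) \<le> ennreal (e / 4)" for t
  proof -
    have "(\<integral>\<^sup>+x. ennreal (g x) \<partial>lborel) = ennreal \<bar>1::real\<bar> * (\<integral>\<^sup>+x. ennreal (g (t + 1 * x)) \<partial>lborel)"
      by (rule nn_integral_real_affine) auto
    then show ?thesis using gint by (simp add: add.commute)
  qed
  define \<eta> where "\<eta> = e / (4 * R + 4)"
  have eta: "\<eta> > 0" unfolding \<eta>_def using e R0 by simp
  have uc: "uniformly_continuous_on {-R-2..R+2} f"
    by (rule compact_uniformly_continuous) (use cf continuous_on_subset in auto)
  then obtain d where d: "d > 0" and dd: "\<And>x x'. x \<in> {-R-2..R+2} \<Longrightarrow> x' \<in> {-R-2..R+2} \<Longrightarrow> dist x' x < d \<Longrightarrow> dist (f x') (f x) < \<eta>"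
    unfolding uniformly_continuous_on_def using eta by metis
  show ?thesis
  proof (intro exI[of _ "min d 1"] conjI allI impI)
    show "min d 1 > 0" using d by simp
    fix t :: real assume t: "\<bar>t\<bar> < min d 1"
    have pw: "ennreal \<bar>f (x + t) - f x\<bar> \<le> ennreal (\<eta> * indicator {-R-1..R+1} x) + ennreal (g (x + t)) + ennreal (g x)" for x
    proof (cases "\<bar>x\<bar> \<le> R + 1")
      case True
      then have "x \<in> {-R-2..R+2}" "x + t \<in> {-R-2..R+2}" "dist (x + t) x < d" using t by (auto simp: dist_real_def)
      then have "\<bar>f (x + t) - f x\<bar> < \<eta>" using dd by (auto simp: dist_real_def)
      moreover have "x \<in> {-R-1..R+1}" using True by auto
      ultimately show ?thesis by (simp add: g_def add_increasing2 ennreal_leI)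
    next
      case False
      then have "R \<le> \<bar>x\<bar>" "R \<le> \<bar>x + t\<bar>" using t by auto
      then have "\<bar>f (x + t) - f x\<bar> \<le> g (x + t) + g x" unfolding g_def by simp
      then have "ennreal \<bar>f (x + t) - f x\<bar> \<le> ennreal (g (x + t)) + ennreal (g x)"
        by (simp add: g_def ennreal_plus[symmetric] del: ennreal_plus)
      from add_mono[OF zero_le this, of "ennreal (\<eta> * indicator {-R-1..R+1} x)"]
      show ?thesis by (simp add: add.assoc)
    qed
    have "(\<integral>\<^sup>+x. ennreal \<bar>f (x + t) - f x\<bar> \<partial>lborel)
        \<le> (\<integral>\<^sup>+x. ennreal (\<eta> * indicator {-R-1..R+1} x) + ennreal (g (x + t)) + ennreal (g x) \<partial>lborel)"
      by (intro nn_integral_mono pw)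
    also have "\<dots> = (\<integral>\<^sup>+x. ennreal \<eta> * indicator {-R-1..R+1} x \<partial>lborel) + (\<integral>\<^sup>+x. ennreal (g (x + t)) \<partial>lborel)
        + (\<integral>\<^sup>+x. ennreal (g x) \<partial>lborel)"
      using eta by (simp add: nn_integral_add ennreal_mult' ennreal_indicator)
    also have "(\<integral>\<^sup>+x. ennreal \<eta> * indicator {-R-1..R+1} x \<partial>lborel) = ennreal (\<eta> * (2 * R + 2))"
      using eta R0 by (simp add: nn_integral_cmult_indicator ennreal_mult')
    also have "\<eta> * (2 * R + 2) = e / 2" unfolding \<eta>_def using R0 by (simp add: field_simps)
    also have "ennreal (e / 2) + (\<integral>\<^sup>+x. ennreal (g (x + t)) \<partial>lborel) + (\<integral>\<^sup>+x. ennreal (g x) \<partial>lborel)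
        \<le> ennreal (e / 2) + ennreal (e / 4) + ennreal (e / 4)"
      by (intro add_mono gint gint' order_refl)
    also have "\<dots> = ennreal e" using e by (simp add: ennreal_plus[symmetric] del: ennreal_plus)
    finally show "(\<integral>\<^sup>+x. ennreal \<bar>f (x + t) - f x\<bar> \<partial>lborel) \<le> ennreal e" .
  qed
qed

lemma omega2_small:
  fixes f :: "real \<Rightarrow> real"
  assumes cf: "continuous_on UNIV f" and fi: "integrable lborel f" and e: "e > 0"
  shows "\<exists>d>0. \<forall>s. s < d \<longrightarrow> omega2 f s \<le> ennreal (2 * e)"
proof -
  have fm[measurable]: "f \<in> borel_measurable borel" using cf by (rule cont_meas)
  obtain d where d: "d > 0" and dd: "\<And>t. \<bar>t\<bar> < d \<Longrightarrow> (\<integral>\<^sup>+x. ennreal \<bar>f (x + t) - f x\<bar> \<partial>lborel) \<le> ennreal e"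
    using transl_small[OF cf fi e] by blast
  show ?thesis
  proof (intro exI[of _ d] conjI allI impI d)
    fix s assume s: "s < d"
    show "omega2 f s \<le> ennreal (2 * e)"
      unfolding omega2_def
    proof (rule SUP_least)
      fix t assume "t \<in> {t. \<bar>t\<bar> \<le> s}"
      then have t: "\<bar>t\<bar> < d" using s by simp
      have "L1norm (delta2 t f) \<le> (\<integral>\<^sup>+x. ennreal \<bar>f (x + t + t) - f (x + t)\<bar> + ennreal \<bar>f (x + t) - f x\<bar> \<partial>lborel)"
        unfolding L1norm_def
      proof (intro nn_integral_mono)
        fix x
        have "\<bar>delta2 t f x\<bar> \<le> \<bar>f (x + t + t) - f (x + t)\<bar> + \<bar>f (x + t) - f x\<bar>"
          unfolding delta2_def by (simp add: algebra_simps)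
        then show "ennreal \<bar>delta2 t f x\<bar> \<le> ennreal \<bar>f (x + t + t) - f (x + t)\<bar> + ennreal \<bar>f (x + t) - f x\<bar>"
          by (simp add: ennreal_plus[symmetric] del: ennreal_plus)
      qed
      also have "\<dots> = (\<integral>\<^sup>+x. ennreal \<bar>f (x + t + t) - f (x + t)\<bar> \<partial>lborel) + (\<integral>\<^sup>+x. ennreal \<bar>f (x + t) - f x\<bar> \<partial>lborel)"
        by (rule nn_integral_add) measurable
      also have "(\<integral>\<^sup>+x. ennreal \<bar>f (x + t + t) - f (x + t)\<bar> \<partial>lborel) = (\<integral>\<^sup>+x. ennreal \<bar>f (x + t) - f x\<bar> \<partial>lborel)"
        using L1norm_shift[of "\<lambda>x. f (x + t) - f x" t] unfolding L1norm_def by simp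
      also have "(\<integral>\<^sup>+x. ennreal \<bar>f (x + t) - f x\<bar> \<partial>lborel) + (\<integral>\<^sup>+x. ennreal \<bar>f (x + t) - f x\<bar> \<partial>lborel)
          \<le> ennreal e + ennreal e"
        using dd[OF t] by (intro add_mono)
      also have "\<dots> = ennreal (2 * e)" using e by (simp add: ennreal_plus[symmetric] del: ennreal_plus)
      finally show "L1norm (delta2 t f) \<le> ennreal (2 * e)" .
    qed
  qed
qed

theorem proposition4:
  fixes \<alpha> :: nat and \<beta> \<xi> :: real and f :: "real \<Rightarrow> real"
  assumes "\<alpha> \<ge> 1"
    and "\<beta> > 3 / (2 * real \<alpha>)"
    and "continuous_on UNIV f"
    and "integrable lborel f"
    and "\<xi> > 0"
  shows "L1norm (\<lambda>x. M_op \<alpha> \<beta> \<xi> f x - f x)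
           \<le> ennreal (1/2
               + Gamma (1 / real \<alpha>) * Gamma (\<beta> - 1 / real \<alpha>)
                 / (Gamma (1 / (2 * real \<alpha>)) * Gamma (\<beta> - 1 / (2 * real \<alpha>)))
               + Gamma (3 / (2 * real \<alpha>)) * Gamma (\<beta> - 3 / (2 * real \<alpha>))
                 / (2 * Gamma (1 / (2 * real \<alpha>)) * Gamma (\<beta> - 1 / (2 * real \<alpha>))))
             * omega2 f \<xi>
         \<and> ((\<lambda>s. L1norm (\<lambda>x. M_op \<alpha> \<beta> s f x - f x)) \<longlongrightarrow> 0) (at_right 0)"
proof
  show "L1norm (\<lambda>x. M_op \<alpha> \<beta> \<xi> f x - f x)
           \<le> ennreal (1/2
               + Gamma (1 / real \<alpha>) * Gamma (\<beta> - 1 / real \<alpha>)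
                 / (Gamma (1 / (2 * real \<alpha>)) * Gamma (\<beta> - 1 / (2 * real \<alpha>)))
               + Gamma (3 / (2 * real \<alpha>)) * Gamma (\<beta> - 3 / (2 * real \<alpha>))
                 / (2 * Gamma (1 / (2 * real \<alpha>)) * Gamma (\<beta> - 1 / (2 * real \<alpha>))))
             * omega2 f \<xi>"
    by (rule main_bound) (use assms in auto)
  define C where "C = 1/2
               + Gamma (1 / real \<alpha>) * Gamma (\<beta> - 1 / real \<alpha>)
                 / (Gamma (1 / (2 * real \<alpha>)) * Gamma (\<beta> - 1 / (2 * real \<alpha>)))
               + Gamma (3 / (2 * real \<alpha>)) * Gamma (\<beta> - 3 / (2 * real \<alpha>))
                 / (2 * Gamma (1 / (2 * real \<alpha>)) * Gamma (\<beta> - 1 / (2 * real \<alpha>)))"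
  define C' where "C' = max C 1"
  have C': "C' > 0" unfolding C'_def by simp
  have bnd: "L1norm (\<lambda>x. M_op \<alpha> \<beta> s f x - f x) \<le> ennreal C' * omega2 f s" if "s > 0" for s
  proof -
    have "L1norm (\<lambda>x. M_op \<alpha> \<beta> s f x - f x) \<le> ennreal C * omega2 f s"
      unfolding C_def by (rule main_bound) (use assms that in auto)
    also have "\<dots> \<le> ennreal C' * omega2 f s"
      unfolding C'_def by (intro mult_right_mono ennreal_leI) auto
    finally show ?thesis .
  qed
  show "((\<lambda>s. L1norm (\<lambda>x. M_op \<alpha> \<beta> s f x - f x)) \<longlongrightarrow> 0) (at_right 0)"
  proof (rule decreasing_tendsto)
    show "\<forall>\<^sub>F s in at_right 0. 0 \<le> L1norm (\<lambda>x. M_op \<alpha> \<beta> s f x - f x)" by simp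
    fix a :: ennreal assume a: "0 < a"
    obtain e where e: "e > 0" and ea: "ennreal (C' * (2 * e)) < a"
    proof (cases "a = top")
      case True
      then show ?thesis using that[of 1] by simp
    next
      case False
      then obtain r where r: "a = ennreal r" "r \<ge> 0" by (cases a) auto
      then have rpos: "r > 0" using a by simp
      show ?thesis
      proof (rule that[of "r / (4 * C')"])
        show "r / (4 * C') > 0" using rpos C' by simp
        have "C' * (2 * (r / (4 * C'))) = r / 2" using C' by (simp add: field_simps)
        then show "ennreal (C' * (2 * (r / (4 * C')))) < a"
          using r rpos by (simp add: ennreal_less_iff)
      qed
    qed
    obtain d where d: "d > 0" and dd: "\<And>s. s < d \<Longrightarrow> omega2 f s \<le> ennreal (2 * e)"
      using omega2_small[OF assms(3,4) e] by blast
    show "\<forall>\<^sub>F s in at_right 0. L1norm (\<lambda>x. M_op \<alpha> \<beta> s f x - f x) < a"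
      unfolding eventually_at_right_field
    proof (intro exI[of _ d] conjI allI impI d)
      fix s :: real assume s: "0 < s" "s < d"
      have "L1norm (\<lambda>x. M_op \<alpha> \<beta> s f x - f x) \<le> ennreal C' * omega2 f s" using bnd s by simp
      also have "\<dots> \<le> ennreal C' * ennreal (2 * e)" by (intro mult_left_mono dd s) simp
      also have "\<dots> = ennreal (C' * (2 * e))" using C' by (simp add: ennreal_mult')
      also have "\<dots> < a" by (rule ea)
      finally show "L1norm (\<lambda>x. M_op \<alpha> \<beta> s f x - f x) < a" .
    qed
  qed
qed

end
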